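(* Consider the generic SURQT model (6) described in the context, and let \[ \mathbf{Q}_2=\mathbf{Q}_1-\mathrm{diag}\!\left(\frac{\theta_i}{\theta_i+\delta_i}\right)\frac{\partial\mathbf{f}(\mathbf 0)}{\partial\mathbf{x}}-\mathrm{diag}\,\mathbf{g}(\mathbf 1),\qquad \mathbf{Q}_1=\frac{\partial\mathbf{f}(\mathbf 0)}{\partial\mathbf{x}}-\mathbf{D}_\theta, \] where $\mathrm{diag}\,\mathbf{g}(\mathbf 1)=\mathrm{diag}(g_1^R(\mathbf 1),\dots,g_N^R(\mathbf 1))$. If $s(\mathbf{Q}_2)>0$, then for any solution $(\mathbf{R}(t),\mathbf{T}(t))$ with initial value in $\Omega$ and $\mathbf{R}(0)>\mathbf 0$ there is $c>0$ such that $\liminf_{t\to\infty}R_i(t)\ge c$ for all $1\le i\le N$ (the rumor is persistent).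
   Context: $V=\{1,\dots,N\}$; $G_R=(V,E_R)$ and $G_T=(V,E_T)$ are strongly connected directed graphs. $\theta_i>0,\delta_i>0$; $\mathbf{D}_\theta=\mathrm{diag}(\theta_i)$. The functions $f_i^T,g_i^R:\mathbb{R}^N\to\mathbb{R}$ satisfy: (C1) $f_i^T$ depends on $x_j$ iff $(i,j)\in E_R$, $g_i^R$ depends on $x_j$ iff $(i,j)\in E_T$; (C2) $f_i^T(\mathbf 0)=g_i^R(\mathbf 0)=0$; (C3) twice continuously differentiable; (C4) strictly increasing in each argument; (C5) concave. $\mathbf{f}=(f_1^T,\dots,f_N^T)^T$ with Jacobian $\frac{\partial\mathbf{f}(\mathbf 0)}{\partial\mathbf x}$ at the origin; $\mathbf 1=(1,\dots,1)$. $s(\mathbf{A})$ is the maximum real part of an eigenvalue of $\mathbf{A}$. The generic SURQT model (6) is, for $i=1,\dots,N$, \[ \frac{dR_i}{dt}=T_i f_i^T(\mathbf{R})-R_i g_i^R(\mathbf{T})-\theta_iR_i,\qquad \frac{dT_i}{dt}=R_i g_i^R(\mathbf{T})-T_i f_i^T(\mathbf{R})+\delta_i(1-R_i-T_i), \] on $\Omega=\{(x_1,\dots,x_{2N})\in\mathbb{R}_+^{2N}: x_i+x_{N+i}\le1\}$. $\mathbf{R}(0)>\mathbf 0$ means every component is positive. *)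

theory Defs
  imports "HOL-Analysis.Analysis"
begin

text \<open>Vertex set V = the finite index type 'n (so N = CARD('n)).\<close>

definition strongly_connected :: "('n \<times> 'n) set \<Rightarrow> bool" where
  "strongly_connected E \<longleftrightarrow> (\<forall>i j. (i, j) \<in> E\<^sup>*)"

definition diag :: "('n::finite \<Rightarrow> real) \<Rightarrow> real^'n^'n" where
  "diag d = (\<chi> i j. if i = j then d i else 0)"

definition cmat :: "real^'n^'n \<Rightarrow> complex^'n^'n" where
  "cmat A = (\<chi> i j. complex_of_real (A $ i $ j))"

definition eigenvalues_c :: "real^'n::finite^'n \<Rightarrow> complex set" where
  "eigenvalues_c A = {z. det (cmat A - mat z) = 0}"

definition spectral_abscissa :: "real^'n::finite^'n \<Rightarrow> real" where
  "spectral_abscissa A = Max (Re ` eigenvalues_c A)"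

definition depends_on :: "(real^'n \<Rightarrow> real) \<Rightarrow> 'n \<Rightarrow> bool" where
  "depends_on f j \<longleftrightarrow> (\<exists>x y. (\<forall>k. k \<noteq> j \<longrightarrow> x $ k = y $ k) \<and> f x \<noteq> f y)"

definition strict_incr_in :: "(real^'n \<Rightarrow> real) \<Rightarrow> 'n \<Rightarrow> bool" where
  "strict_incr_in f j \<longleftrightarrow>
     (\<forall>x y. (\<forall>k. k \<noteq> j \<longrightarrow> x $ k = y $ k) \<and> x $ j < y $ j \<longrightarrow> f x < f y)"

definition C2 :: "(real^'n::finite \<Rightarrow> real) \<Rightarrow> bool" where
  "C2 f \<longleftrightarrow> (\<exists>(g :: real^'n \<Rightarrow> real^'n) (H :: real^'n \<Rightarrow> real^'n^'n).
      (\<forall>x. (f has_derivative (\<lambda>h. g x \<bullet> h)) (at x)) \<and>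
      (\<forall>x. (g has_derivative (\<lambda>h. H x *v h)) (at x)) \<and>
      continuous_on UNIV H)"

definition jacobian0 :: "('n::finite \<Rightarrow> real^'n \<Rightarrow> real) \<Rightarrow> real^'n^'n" where
  "jacobian0 f = matrix (frechet_derivative (\<lambda>x. \<chi> i. f i x) (at 0))"

end

theory Submission
  imports Defs "HOL-Computational_Algebra.Fundamental_Theorem_Algebra"
begin

lemma barrier:
  fixes h :: "'k \<Rightarrow> real \<Rightarrow> real"
  assumes finK: "finite K" and ab: "a \<le> b"
    and cont: "\<And>k. k \<in> K \<Longrightarrow> continuous_on {a..b} (h k)"
    and init: "\<And>k. k \<in> K \<Longrightarrow> h k a > 0"
    and step: "\<And>k t. k \<in> K \<Longrightarrow> a < t \<Longrightarrow> t \<le> b \<Longrightarrow>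
        (\<And>j s. j \<in> K \<Longrightarrow> a \<le> s \<Longrightarrow> s \<le> t \<Longrightarrow> h j s \<ge> 0) \<Longrightarrow> h k t = 0 \<Longrightarrow>
        \<exists>D>0. (h k has_real_derivative D) (at t)"
    and kK: "k \<in> K" and t: "a \<le> t" "t \<le> b"
  shows "h k t > 0"
proof (rule ccontr)
  assume neg: "\<not> h k t > 0"
  define S where "S = (\<Union>j\<in>K. {s \<in> {a..b}. h j s \<le> 0})"
  have clS: "closed S" unfolding S_def
  proof (intro closed_UN[OF finK] ballI)
    fix j assume "j \<in> K"
    from continuous_closed_preimage[OF cont[OF this] closed_atLeastAtMost, of "{..0}"]
    have "closed ({a..b} \<inter> h j -` {..0})" by simp
    moreover have "{s \<in> {a..b}. h j s \<le> 0} = {a..b} \<inter> h j -` {..0}" by auto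
    ultimately show "closed {s \<in> {a..b}. h j s \<le> 0}" by simp
  qed
  have tS: "t \<in> S" using neg kK t unfolding S_def by force
  have bdd: "bdd_below S" unfolding S_def by (auto intro!: bdd_belowI[of _ a])
  define t' where "t' = Inf S"
  have t'S: "t' \<in> S" unfolding t'_def using closed_contains_Inf[OF _ bdd clS] tS by blast
  then obtain k' where k': "k' \<in> K" "a \<le> t'" "t' \<le> b" "h k' t' \<le> 0" unfolding S_def by auto
  have "t' \<noteq> a" using init[OF k'(1)] k'(4) by auto
  hence at': "a < t'" using k' by auto
  have below: "h j s > 0" if "j \<in> K" "a \<le> s" "s < t'" for j s
  proof (rule ccontr)
    assume "\<not> h j s > 0"
    hence "s \<in> S" using that k' unfolding S_def by force
    hence "t' \<le> s" unfolding t'_def by (rule cInf_lower[OF _ bdd])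
    thus False using that by auto
  qed
  have nonneg: "h j s \<ge> 0" if "j \<in> K" "a \<le> s" "s \<le> t'" for j s
  proof -
    have "closed ({a..t'} \<inter> h j -` {0..})"
      using continuous_closed_preimage[OF continuous_on_subset[OF cont[OF that(1)], of "{a..t'}"]
          closed_atLeastAtMost, of "{0..}"] k' by simp
    moreover have "{x \<in> {a..t'}. h j x \<ge> 0} = {a..t'} \<inter> h j -` {0..}" by auto
    ultimately have cl: "closed {x \<in> {a..t'}. h j x \<ge> 0}" by simp
    have "{a..<t'} \<subseteq> {x \<in> {a..t'}. h j x \<ge> 0}" using below[OF that(1)] by (auto intro: less_imp_le)
    hence "closure {a..<t'} \<subseteq> {x \<in> {a..t'}. h j x \<ge> 0}" using cl by (rule closure_minimal)
    thus ?thesis using that at' by auto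
  qed
  have z: "h k' t' = 0" using nonneg[OF k'(1) k'(2) order_refl] k'(4) by auto
  obtain D where D: "D > 0" "(h k' has_real_derivative D) (at t')"
    using step[OF k'(1) at' k'(3) nonneg z] by blast
  obtain d where d: "d > 0" "\<And>e. e > 0 \<Longrightarrow> e < d \<Longrightarrow> h k' (t' - e) < h k' t'"
    using DERIV_pos_inc_left[OF D(2) D(1)] by blast
  define e where "e = min d (t' - a) / 2"
  have e: "e > 0" "e < d" "a \<le> t' - e" "t' - e < t'" using d at' unfolding e_def by (auto simp: min_def field_simps)
  have "h k' (t' - e) < 0" using d(2)[OF e(1) e(2)] z by simp
  moreover have "h k' (t' - e) > 0" using below[OF k'(1) e(3) e(4)] .
  ultimately show False by simp
qed

lemma vec_has_derivative:
  fixes F :: "'a::real_normed_vector \<Rightarrow> real^'n"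
  assumes "\<And>i. ((\<lambda>x. F x $ i) has_derivative (\<lambda>h. F' h $ i)) (at a within S)"
  shows "(F has_derivative F') (at a within S)"
  apply (subst has_derivative_componentwise_within)
  using assms by (auto simp: Basis_vec_def inner_axis)

lemma vec_nth_has_derivative:
  assumes "(F has_derivative F') net"
  shows "((\<lambda>x. F x $ i) has_derivative (\<lambda>h. F' h $ i)) net"
  using bounded_linear.has_derivative[OF bounded_linear_vec_nth assms] .

lemma jac_entry:
  fixes f :: "'n::finite \<Rightarrow> real^'n \<Rightarrow> real"
  assumes "\<And>i. (f i has_derivative (\<lambda>h. G i \<bullet> h)) (at 0)"
  shows "jacobian0 f $ i $ j = G i $ j"
proof -
  have d: "((\<lambda>x. \<chi> i. f i x) has_derivative (\<lambda>h. \<chi> i. G i \<bullet> h)) (at 0)"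
    by (rule vec_has_derivative) (simp add: assms)
  have "frechet_derivative (\<lambda>x. \<chi> i. f i x) (at 0) = (\<lambda>h. \<chi> i. G i \<bullet> h)"
    using frechet_derivative_at[OF d] by simp
  thus ?thesis unfolding jacobian0_def matrix_def by (simp add: inner_axis)
qed

lemma mono_all:
  fixes F :: "real^'n::finite \<Rightarrow> real"
  assumes w: "\<And>j x y. (\<forall>k. k \<noteq> j \<longrightarrow> x $ k = y $ k) \<Longrightarrow> x $ j \<le> y $ j \<Longrightarrow> F x \<le> F y"
    and xy: "\<And>k. x $ k \<le> y $ k"
  shows "F x \<le> F y"
proof -
  define z where "z S = (\<chi> k. if k \<in> S then y $ k else x $ k)" for S
  have "F x \<le> F (z S)" if "finite S" for S
    using that
  proof (induction S rule: finite_induct)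
    case empty
    then show ?case by (simp add: z_def vec_lambda_eta)
  next
    case (insert j S)
    have "F (z S) \<le> F (z (insert j S))"
      by (rule w[of j]) (use xy insert in \<open>auto simp: z_def\<close>)
    then show ?case using insert by simp
  qed
  moreover have "z UNIV = y" by (simp add: z_def)
  ultimately show ?thesis using finite_class.finite_UNIV by metis
qed

lemma weak_incr:
  assumes "strict_incr_in F j \<or> \<not> depends_on F j"
    and "\<forall>k. k \<noteq> j \<longrightarrow> x $ k = y $ k" "x $ j \<le> y $ j"
  shows "F x \<le> F y"
proof (cases "x $ j = y $ j")
  case True
  hence "x = y" using assms(2) by (metis vec_eq_iff)
  thus ?thesis by simp
next
  case False
  hence lt: "x $ j < y $ j" using assms(3) by simp
  show ?thesis
  proof (cases "strict_incr_in F j")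
    case True
    thus ?thesis using lt assms(2) unfolding strict_incr_in_def by (meson less_imp_le)
  next
    case False
    hence "\<not> depends_on F j" using assms(1) by simp
    thus ?thesis using assms(2) unfolding depends_on_def by (metis order_refl)
  qed
qed

lemma det_zero_kernel:
  fixes B :: "'a::field^'n::finite^'n"
  assumes "det B = 0"
  shows "\<exists>v. v \<noteq> 0 \<and> B *v v = 0"
proof -
  have "\<not> invertible B" using invertible_det_nz[of B] assms by simp
  thus ?thesis using matrix_left_invertible_ker[of B] invertible_left_inverse[of B] by auto
qed

definition epoly :: "real^'n^'n \<Rightarrow> 'n \<Rightarrow> 'n \<Rightarrow> complex poly" where
  "epoly A i j = [: complex_of_real (A $ i $ j), - (if i = j then 1 else 0) :]"

definition cpoly :: "real^'n::finite^'n \<Rightarrow> complex poly" where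
  "cpoly A = (\<Sum>p\<in>{p. p permutes (UNIV::'n set)}. of_int (sign p) * (\<Prod>i\<in>UNIV. epoly A i (p i)))"

lemma cpoly_eval: "poly (cpoly A) z = det (cmat A - mat z)"
  unfolding cpoly_def det_def
  by (simp add: poly_sum poly_prod epoly_def cmat_def mat_def of_int_poly)
     (intro sum.cong refl arg_cong2[where f="(*)"] prod.cong, auto)

lemma cpoly_coeff: "coeff (cpoly (A::real^'n::finite^'n)) CARD('n) = (-1) ^ CARD('n)"
proof -
  let ?n = "CARD('n)"
  have other: "coeff (\<Prod>i\<in>UNIV. epoly A i (p i)) ?n = 0" if "p permutes UNIV" "p \<noteq> id" for p
  proof -
    obtain i0 where i0: "p i0 \<noteq> i0" using \<open>p \<noteq> id\<close> by (auto simp: fun_eq_iff)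
    have "degree (\<Prod>i\<in>UNIV. epoly A i (p i)) \<le> (\<Sum>i\<in>UNIV. degree (epoly A i (p i)))"
      using degree_prod_sum_le[of UNIV "\<lambda>i. epoly A i (p i)"] by (simp add: o_def)
    also have "\<dots> < (\<Sum>i\<in>(UNIV::'n set). 1)"
    proof (rule sum_strict_mono_ex1)
      show "\<forall>i\<in>UNIV. degree (epoly A i (p i)) \<le> 1" by (simp add: epoly_def)
      show "\<exists>i\<in>UNIV. degree (epoly A i (p i)) < 1" using i0 by (auto simp: epoly_def) (metis i0)
    qed simp
    finally show ?thesis by (simp add: coeff_eq_0)
  qed
  have idterm: "coeff (\<Prod>i\<in>UNIV. epoly A i i) ?n = (-1) ^ ?n"
  proof -
    have nz: "\<forall>i\<in>UNIV. epoly A i i \<noteq> 0" by (simp add: epoly_def)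
    have deg: "degree (\<Prod>i\<in>UNIV. epoly A i i) = ?n"
      using degree_prod_eq_sum_degree[OF nz] by (simp add: epoly_def)
    have "lead_coeff (\<Prod>i\<in>UNIV. epoly A i i) = (\<Prod>i\<in>(UNIV::'n set). -1)"
      by (simp add: lead_coeff_prod epoly_def)
    thus ?thesis using deg by simp
  qed
  have "coeff (cpoly A) ?n = (\<Sum>p\<in>{p. p permutes (UNIV::'n set)}. of_int (sign p) * coeff (\<Prod>i\<in>UNIV. epoly A i (p i)) ?n)"
    unfolding cpoly_def by (simp add: coeff_sum of_int_poly)
  also have "\<dots> = of_int (sign (id::'n\<Rightarrow>'n)) * coeff (\<Prod>i\<in>UNIV. epoly A i (id i)) ?n
      + (\<Sum>p\<in>{p. p permutes (UNIV::'n set)} - {id}. of_int (sign p) * coeff (\<Prod>i\<in>UNIV. epoly A i (p i)) ?n)"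
    by (rule sum.remove) (auto simp: finite_permutations permutes_id)
  also have "(\<Sum>p\<in>{p. p permutes (UNIV::'n set)} - {id}. of_int (sign p) * coeff (\<Prod>i\<in>UNIV. epoly A i (p i)) ?n) = 0"
    by (rule sum.neutral) (auto simp: other)
  finally show ?thesis using idterm by (simp add: sign_id)
qed

lemma eigen_exists:
  fixes A :: "real^'n::finite^'n"
  assumes "spectral_abscissa A > 0"
  shows "\<exists>z v. v \<noteq> 0 \<and> (cmat A - mat z) *v v = 0 \<and> Re z = spectral_abscissa A"
proof -
  have c: "coeff (cpoly A) CARD('n) \<noteq> 0" by (simp add: cpoly_coeff)
  hence nz: "cpoly A \<noteq> 0" by auto
  have "CARD('n) \<le> degree (cpoly A)" using c by (rule le_degree)
  hence "degree (cpoly A) \<noteq> 0" using zero_less_card_finite[where 'a='n] by linarith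
  hence "\<not> constant (poly (cpoly A))" by (simp add: constant_degree)
  then obtain z0 where "poly (cpoly A) z0 = 0" using fundamental_theorem_of_algebra by blast
  hence ne: "eigenvalues_c A \<noteq> {}" by (auto simp: eigenvalues_c_def cpoly_eval)
  have fin: "finite (eigenvalues_c A)"
    using poly_roots_finite[OF nz] by (simp add: eigenvalues_c_def cpoly_eval)
  have "spectral_abscissa A \<in> Re ` eigenvalues_c A"
    unfolding spectral_abscissa_def using fin ne by (intro Max_in) auto
  then obtain z where z: "z \<in> eigenvalues_c A" "Re z = spectral_abscissa A" by auto
  then obtain v where "v \<noteq> 0" "(cmat A - mat z) *v v = 0"
    using det_zero_kernel[of "cmat A - mat z"] by (auto simp: eigenvalues_c_def)
  thus ?thesis using z by blast
qed

lemma row_split: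
  fixes Q :: "'b::comm_ring_1^'n::finite^'n"
  shows "(Q *v x) $ i = Q$i$i * x$i + (\<Sum>j\<in>UNIV - {i}. Q$i$j * x$j)"
  unfolding matrix_vector_mult_def by (simp add: sum.remove[of UNIV i])

lemma eigen_abs:
  fixes Q :: "real^'n::finite^'n"
  assumes offdiag: "\<And>i j. i \<noteq> j \<Longrightarrow> Q$i$j \<ge> 0"
    and v: "(cmat Q - mat z) *v v = 0"
  shows "(Q *v (\<chi> i. cmod (v$i))) $ i \<ge> Re z * cmod (v$i)"
proof -
  have "((cmat Q - mat z) *v v) $ i = 0" using v by simp
  hence e0: "(\<Sum>j\<in>UNIV. (cmat Q $ i $ j - (if i = j then z else 0)) * v $ j) = 0"
    by (simp add: mat_def matrix_vector_mult_def)
  have "(\<Sum>j\<in>UNIV. (cmat Q $ i $ j - (if i = j then z else 0)) * v $ j)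
      = (\<Sum>j\<in>UNIV. cmat Q $ i $ j * v $ j) - (\<Sum>j\<in>UNIV. (if i = j then z * v $ j else 0))"
    by (simp add: left_diff_distrib sum_subtractf if_distrib[of "\<lambda>a. a * _"] cong: if_cong)
  also have "(\<Sum>j\<in>UNIV. (if i = j then z * v $ j else 0)) = z * v$i" by simp
  finally have e: "(cmat Q *v v) $ i = z * v$i" using e0 by (simp add: matrix_vector_mult_def)
  have "(z - of_real (Q$i$i)) * v$i = (\<Sum>j\<in>UNIV - {i}. of_real (Q$i$j) * v$j)"
    using e row_split[of "cmat Q" v i] by (simp add: cmat_def algebra_simps)
  hence "cmod ((z - of_real (Q$i$i)) * v$i) = cmod (\<Sum>j\<in>UNIV - {i}. of_real (Q$i$j) * v$j)"
    by simp
  also have "\<dots> \<le> (\<Sum>j\<in>UNIV - {i}. cmod (of_real (Q$i$j) * v$j))" by (rule norm_sum)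
  also have "\<dots> = (\<Sum>j\<in>UNIV - {i}. Q$i$j * cmod (v$j))"
  proof (rule sum.cong[OF refl])
    fix j assume "j \<in> UNIV - {i}"
    hence "Q$i$j \<ge> 0" using offdiag[of i j] by auto
    thus "cmod (of_real (Q$i$j) * v$j) = Q$i$j * cmod (v$j)" by (simp add: norm_mult)
  qed
  finally have "cmod ((z - of_real (Q$i$i)) * v$i) \<le> (\<Sum>j\<in>UNIV - {i}. Q$i$j * cmod (v$j))" .
  moreover have "(Re z - Q$i$i) * cmod (v$i) \<le> cmod ((z - of_real (Q$i$i)) * v$i)"
  proof -
    have "Re z - Q$i$i \<le> cmod (z - of_real (Q$i$i))"
      using complex_Re_le_cmod[of "z - of_real (Q$i$i)"] by simp
    thus ?thesis by (simp add: norm_mult mult_right_mono)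
  qed
  ultimately show ?thesis using row_split[of Q "\<chi> i. cmod (v$i)" i] by (simp add: algebra_simps)
qed

lemma pos_subinvariant:
  fixes Q :: "real^'n::finite^'n" and E :: "('n \<times> 'n) set"
  assumes offdiag: "\<And>i j. i \<noteq> j \<Longrightarrow> Q$i$j \<ge> 0"
    and edge: "\<And>i j. (i, j) \<in> E \<Longrightarrow> i \<noteq> j \<Longrightarrow> Q$i$j > 0"
    and conn: "strongly_connected E"
    and w0: "\<And>i. w$i \<ge> 0" and wsub: "\<And>i. (Q *v w)$i \<ge> s * w$i" and wnz: "w \<noteq> 0"
  shows "\<exists>u. (\<forall>i. u$i > 0) \<and> (\<forall>i. (Q *v u)$i \<ge> s * u$i)"
proof -
  define c where "c = 1 + (\<Sum>k\<in>UNIV. \<bar>Q$k$k\<bar>)"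
  have cQ: "Q$i$i + c \<ge> 1" for i
  proof -
    have "\<bar>Q$i$i\<bar> \<le> (\<Sum>k\<in>UNIV. \<bar>Q$k$k\<bar>)" by (rule member_le_sum) auto
    thus ?thesis unfolding c_def by linarith
  qed
  define F where "F x = Q *v x + c *\<^sub>R x" for x :: "real^'n"
  have Fcomp: "(F x)$i = (Q$i$i + c) * x$i + (\<Sum>j\<in>UNIV - {i}. Q$i$j * x$j)" for x i
    unfolding F_def using row_split[of Q x i] by (simp add: algebra_simps)
  have Fdiag: "(F x)$i \<ge> x$i" if "\<And>j. x$j \<ge> 0" for x i
  proof -
    have "(\<Sum>j\<in>UNIV - {i}. Q$i$j * x$j) \<ge> 0" using that offdiag by (intro sum_nonneg) auto
    moreover have "(Q$i$i + c) * x$i \<ge> 1 * x$i" using cQ[of i] that[of i] by (intro mult_right_mono) auto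
    ultimately show ?thesis unfolding Fcomp by simp
  qed
  have Fnn: "(F x)$i \<ge> 0" if "\<And>j. x$j \<ge> 0" for x i
    using Fdiag[OF that, of i] that[of i] by linarith
  have Foff: "(F x)$i \<ge> Q$i$j * x$j" if "\<And>j. x$j \<ge> 0" "j \<noteq> i" for x i j
  proof -
    have "Q$i$j * x$j \<le> (\<Sum>j\<in>UNIV - {i}. Q$i$j * x$j)"
      using that offdiag by (intro member_le_sum) auto
    moreover have "(Q$i$i + c) * x$i \<ge> 0" using cQ[of i] that(1)[of i] by simp
    ultimately show ?thesis unfolding Fcomp by simp
  qed
  have Fcommute: "Q *v F x = F (Q *v x)" for x
    unfolding F_def by (simp add: matrix_vector_right_distrib matrix_vector_mult_scaleR)
  have Flin: "F x - s *\<^sub>R F y = F (x - s *\<^sub>R y)" for x y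
    unfolding F_def by (simp add: algebra_simps)
  define P where "P x \<longleftrightarrow> (\<forall>i. x$i \<ge> 0) \<and> (\<forall>i. (Q *v x)$i \<ge> s * x$i)" for x
  have PF: "P (F x)" if "P x" for x
  proof -
    have nn: "\<And>j. x$j \<ge> 0" using that by (simp add: P_def)
    have d: "\<And>j. (Q *v x - s *\<^sub>R x)$j \<ge> 0" using that by (simp add: P_def)
    have "(Q *v F x - s *\<^sub>R F x)$i \<ge> 0" for i
      unfolding Fcommute Flin using Fnn[OF d] .
    thus ?thesis using Fnn[OF nn] by (simp add: P_def)
  qed
  define it where "it k = (F ^^ k) w" for k
  have Pit: "P (it k)" for k
  proof (induction k)
    case 0 thus ?case by (simp add: it_def P_def w0 wsub)
  next
    case (Suc k) thus ?case using PF[of "it k"] by (simp add: it_def)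
  qed
  have itnn: "\<And>j. it k $ j \<ge> 0" for k using Pit[of k] by (simp add: P_def)
  have itSuc: "it (Suc k) = F (it k)" for k by (simp add: it_def)
  have stay: "it (m + d) $ i > 0" if "it m $ i > 0" for m d i
  proof (induction d)
    case 0 thus ?case using that by simp
  next
    case (Suc d)
    have "it (m + Suc d) $ i \<ge> it (m + d) $ i" using Fdiag[OF itnn] by (simp add: itSuc)
    thus ?case using Suc by simp
  qed
  obtain j0 where j0: "w$j0 \<noteq> 0" using wnz by (metis vec_eq_iff zero_index)
  hence j0p: "it 0 $ j0 > 0" using w0[of j0] by (simp add: it_def)
  have reach: "\<exists>k. it k $ i > 0" if "(i, j0) \<in> E\<^sup>*" for i
    using that
  proof (induction rule: converse_rtrancl_induct)
    case base thus ?case using j0p by blast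
  next
    case (step i j)
    then obtain k where k: "it k $ j > 0" by blast
    show ?case
    proof (cases "i = j")
      case True thus ?thesis using k by blast
    next
      case False
      have "it (Suc k) $ i \<ge> Q$i$j * it k $ j" using Foff[OF itnn, of j i] False by (simp add: itSuc)
      moreover have "Q$i$j * it k $ j > 0" using edge[OF step(1) False] k by simp
      ultimately show ?thesis by (intro exI[of _ "Suc k"]) simp
    qed
  qed
  have "\<forall>i. \<exists>k. it k $ i > 0" using reach conn unfolding strongly_connected_def by blast
  then obtain kf where kf: "\<And>i. it (kf i) $ i > 0" by metis
  define K where "K = (\<Sum>i\<in>UNIV. kf i)"
  have "it K $ i > 0" for i
  proof -
    have "kf i \<le> K" unfolding K_def by (rule member_le_sum) auto
    then obtain d where "K = kf i + d" using le_Suc_ex by blast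
    thus ?thesis using stay[OF kf[of i]] by simp
  qed
  thus ?thesis using Pit[of K] unfolding P_def by blast
qed

lemma ode_comp:
  fixes X :: "real \<Rightarrow> real^'n::finite"
  assumes d: "\<And>t. t \<ge> 0 \<Longrightarrow> (X has_vector_derivative V t) (at t within {0..})"
  shows ode_cont: "continuous_on {0..} X"
    and ode_cont_comp: "continuous_on {0..} (\<lambda>t. X t $ i)"
    and ode_deriv: "t > 0 \<Longrightarrow> ((\<lambda>t. X t $ i) has_real_derivative V t $ i) (at t)"
proof -
  show c: "continuous_on {0..} X"
    unfolding continuous_on_eq_continuous_within
    by (intro ballI has_vector_derivative_continuous[OF d]) simp
  show "continuous_on {0..} (\<lambda>t. X t $ i)"
    using c by (rule continuous_on_component)
  assume t: "t > 0"
  have "interior {0::real..} = {0<..}" by simp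
  hence "at t within {0..} = at t" using t by (intro at_within_interior) auto
  hence "(X has_vector_derivative V t) (at t)" using d[of t] t by simp
  hence "(X has_derivative (\<lambda>h. h *\<^sub>R V t)) (at t)" by (simp add: has_vector_derivative_def)
  from vec_nth_has_derivative[OF this, of i]
  have "((\<lambda>t. X t $ i) has_derivative (\<lambda>h. h * V t $ i)) (at t)" by simp
  moreover have "(\<lambda>h. h * V t $ i) = (*) (V t $ i)" by (auto simp: fun_eq_iff)
  ultimately show "((\<lambda>t. X t $ i) has_real_derivative V t $ i) (at t)"
    by (simp add: has_field_derivative_def)
qed

lemma dir_quot:
  fixes F :: "real^'n::finite \<Rightarrow> real"
  assumes "(F has_derivative (\<lambda>h. G \<bullet> h)) (at 0)" "F 0 = 0"
  shows "((\<lambda>t. F (t *\<^sub>R y) / t) \<longlongrightarrow> G \<bullet> y) (at 0)"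
proof -
  have l: "((\<lambda>t. t *\<^sub>R y) has_derivative (\<lambda>h. h *\<^sub>R y)) (at 0)"
    by (intro derivative_eq_intros) auto
  have F0: "(F has_derivative (\<lambda>h. G \<bullet> h)) (at (0 *\<^sub>R y))" using assms(1) by simp
  have "((\<lambda>t. F (t *\<^sub>R y)) has_derivative (\<lambda>h. G \<bullet> (h *\<^sub>R y))) (at 0)"
    using has_derivative_compose[OF l F0] by simp
  moreover have "(\<lambda>h. G \<bullet> (h *\<^sub>R y)) = (*) (G \<bullet> y)" by (auto simp: fun_eq_iff)
  ultimately have "((\<lambda>t. F (t *\<^sub>R y)) has_real_derivative G \<bullet> y) (at 0)"
    by (simp add: has_field_derivative_def)
  thus ?thesis using assms(2) by (simp add: DERIV_def)
qed

lemma concave_scale: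
  assumes "concave_on UNIV F" "F 0 = 0" "0 \<le> t" "t \<le> 1"
  shows "F (t *\<^sub>R y) \<ge> t * F y"
  using concave_onD[OF assms(1) assms(3,4), of 0 y] assms(2) by simp

lemma concave_deriv_ge:
  fixes F :: "real^'n::finite \<Rightarrow> real"
  assumes "concave_on UNIV F" "F 0 = 0" "(F has_derivative (\<lambda>h. G \<bullet> h)) (at 0)"
  shows "F y \<le> G \<bullet> y"
proof -
  have lim: "((\<lambda>t. F (t *\<^sub>R y) / t) \<longlongrightarrow> G \<bullet> y) (at_right 0)"
    using dir_quot[OF assms(3,2)] by (rule filterlim_mono) (simp_all add: at_le)
  have ev: "eventually (\<lambda>t. F y \<le> F (t *\<^sub>R y) / t) (at_right 0)"
    unfolding eventually_at_right_field
  proof (intro exI[of _ 1] conjI allI impI)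
    fix t :: real assume "0 < t" "t < 1"
    thus "F y \<le> F (t *\<^sub>R y) / t"
      using concave_scale[OF assms(1,2), of t y] by (simp add: pos_le_divide_eq mult.commute)
  qed (rule zero_less_one)
  show ?thesis by (rule tendsto_lowerbound[OF lim ev]) (simp add: trivial_limit_at_right_real)
qed

lemma prod_lb:
  fixes a b \<eta> K C :: real
  assumes "a \<ge> -\<eta>" "b \<ge> -K*\<eta>" "\<bar>a\<bar> \<le> C" "\<bar>b\<bar> \<le> C" "\<eta> \<ge> 0" "K \<ge> 0"
  shows "a * b \<ge> -(C*(1+K))*\<eta>"
proof -
  have C0: "C \<ge> 0" using assms(3) by linarith
  have e: "-(C*(1+K))*\<eta> = -(C*\<eta>) - C*(K*\<eta>)" by (simp add: algebra_simps)
  have p1: "C*\<eta> \<ge> 0" using C0 assms(5) by simp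
  have p2: "C*(K*\<eta>) \<ge> 0" using C0 assms(5,6) by simp
  show ?thesis
  proof (cases "a \<ge> 0")
    case True
    show ?thesis
    proof (cases "b \<ge> 0")
      case True thus ?thesis using \<open>a\<ge>0\<close> e p1 p2 by (smt (verit) mult_nonneg_nonneg)
    next
      case False
      have "a * b \<ge> a * (-K*\<eta>)" using assms True by (intro mult_left_mono) auto
      moreover have "a * (K*\<eta>) \<le> C * (K*\<eta>)" using assms True by (intro mult_right_mono) auto
      ultimately show ?thesis using e p1 by simp
    qed
  next
    case False
    show ?thesis
    proof (cases "b \<ge> 0")
      case True
      have "a * b \<ge> (-\<eta>) * b" using assms True by (intro mult_right_mono) auto
      moreover have "\<eta> * b \<le> \<eta> * C" using assms True by (intro mult_left_mono) auto
      ultimately show ?thesis using e p2 by (simp add: mult.commute)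
    next
      case False
      hence "a * b \<ge> 0" using \<open>\<not> a \<ge> 0\<close> by (simp add: mult_nonpos_nonpos)
      thus ?thesis using e p1 p2 by linarith
    qed
  qed
qed

lemma cont_bound:
  fixes X :: "real \<Rightarrow> real^'n::finite"
  assumes "continuous_on {a..b} X"
  shows "\<exists>B. \<forall>t\<in>{a..b}. \<forall>i. \<bar>X t $ i\<bar> \<le> B"
proof -
  have "compact (X ` {a..b})" using compact_continuous_image[OF assms compact_Icc] .
  hence "bounded (X ` {a..b})" by (rule compact_imp_bounded)
  then obtain B where "\<forall>x\<in>X ` {a..b}. norm x \<le> B" unfolding Elementary_Metric_Spaces.bounded_iff by blast
  thus ?thesis using component_le_norm_cart order_trans by blast
qed

lemma invariance:
  fixes f g :: "'n::finite \<Rightarrow> real^'n \<Rightarrow> real" and R T :: "real \<Rightarrow> real^'n"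
    and \<theta> \<delta> :: "'n \<Rightarrow> real"
  assumes theta_pos: "\<And>i. \<theta> i > 0" and delta_pos: "\<And>i. \<delta> i > 0"
    and fmono: "\<And>i x y. (\<And>k. x$k \<le> y$k) \<Longrightarrow> f i x \<le> f i y"
    and gmono: "\<And>i x y. (\<And>k. x$k \<le> y$k) \<Longrightarrow> g i x \<le> g i y"
    and f0: "\<And>i. f i 0 = 0" and g0: "\<And>i. g i 0 = 0"
    and fconc: "\<And>i. concave_on UNIV (f i)" and gconc: "\<And>i. concave_on UNIV (g i)"
    and fcont: "\<And>i. continuous_on UNIV (f i)" and gcont: "\<And>i. continuous_on UNIV (g i)"
    and ode_R: "\<And>t. t \<ge> 0 \<Longrightarrow> (R has_vector_derivative
        (\<chi> i. T t $ i * f i (R t) - R t $ i * g i (T t) - \<theta> i * R t $ i)) (at t within {0..})"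
    and ode_T: "\<And>t. t \<ge> 0 \<Longrightarrow> (T has_vector_derivative
        (\<chi> i. R t $ i * g i (T t) - T t $ i * f i (R t) + \<delta> i * (1 - R t $ i - T t $ i))) (at t within {0..})"
    and init_Omega: "\<And>i. R 0 $ i \<ge> 0 \<and> T 0 $ i \<ge> 0 \<and> R 0 $ i + T 0 $ i \<le> 1"
    and t1: "t1 \<ge> 0"
  shows "R t1 $ i0 \<ge> 0 \<and> T t1 $ i0 \<ge> 0 \<and> R t1 $ i0 + T t1 $ i0 \<le> 1"
proof -
  define dR where "dR t = (\<chi> i. T t $ i * f i (R t) - R t $ i * g i (T t) - \<theta> i * R t $ i)" for t
  define dT where "dT t = (\<chi> i. R t $ i * g i (T t) - T t $ i * f i (R t) + \<delta> i * (1 - R t $ i - T t $ i))" for t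
  have odeR: "\<And>t. t \<ge> 0 \<Longrightarrow> (R has_vector_derivative dR t) (at t within {0..})" using ode_R by (simp add: dR_def)
  have odeT: "\<And>t. t \<ge> 0 \<Longrightarrow> (T has_vector_derivative dT t) (at t within {0..})" using ode_T by (simp add: dT_def)
  have Rd: "\<And>t i. t > 0 \<Longrightarrow> ((\<lambda>t. R t $ i) has_real_derivative dR t $ i) (at t)" by (rule ode_deriv[OF odeR])
  have Td: "\<And>t i. t > 0 \<Longrightarrow> ((\<lambda>t. T t $ i) has_real_derivative dT t $ i) (at t)" by (rule ode_deriv[OF odeT])
  have Rc: "continuous_on {0..t1} R" using ode_cont[OF odeR] by (rule continuous_on_subset) auto
  have Tc: "continuous_on {0..t1} T" using ode_cont[OF odeT] by (rule continuous_on_subset) auto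
  have Fc: "continuous_on {0..t1} (\<lambda>t. \<chi> i. f i (R t))"
    by (intro continuous_on_vec_lambda continuous_on_compose2[OF fcont Rc]) auto
  have Gc: "continuous_on {0..t1} (\<lambda>t. \<chi> i. g i (T t))"
    by (intro continuous_on_vec_lambda continuous_on_compose2[OF gcont Tc]) auto
  obtain BR where BR: "\<And>t i. t \<in> {0..t1} \<Longrightarrow> \<bar>R t $ i\<bar> \<le> BR" using cont_bound[OF Rc] by blast
  obtain BT where BT: "\<And>t i. t \<in> {0..t1} \<Longrightarrow> \<bar>T t $ i\<bar> \<le> BT" using cont_bound[OF Tc] by blast
  from cont_bound[OF Fc] obtain BF where BF0': "\<forall>t\<in>{0..t1}. \<forall>i. \<bar>(\<chi> i. f i (R t)) $ i\<bar> \<le> BF" by blast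
  hence BF: "\<And>t i. t \<in> {0..t1} \<Longrightarrow> \<bar>f i (R t)\<bar> \<le> BF" by simp
  from cont_bound[OF Gc] obtain BG where BG0': "\<forall>t\<in>{0..t1}. \<forall>i. \<bar>(\<chi> i. g i (T t)) $ i\<bar> \<le> BG" by blast
  hence BG: "\<And>t i. t \<in> {0..t1} \<Longrightarrow> \<bar>g i (T t)\<bar> \<le> BG" by simp
  have BR0: "BR \<ge> 0" using BR[of 0 i0] t1 by auto
  have BT0: "BT \<ge> 0" using BT[of 0 i0] t1 by auto
  have BF0: "BF \<ge> 0" using BF[of 0 i0] t1 by auto
  have BG0: "BG \<ge> 0" using BG[of 0 i0] t1 by auto
  define C where "C = BR + BT + BF + BG"
  have C0: "C \<ge> 0" using BR0 BT0 BF0 BG0 by (simp add: C_def)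
  have CR: "\<bar>R t $ i\<bar> \<le> C" if "t \<in> {0..t1}" for t i using BR[OF that, of i] BT0 BF0 BG0 unfolding C_def by linarith
  have CT: "\<bar>T t $ i\<bar> \<le> C" if "t \<in> {0..t1}" for t i using BT[OF that, of i] BR0 BF0 BG0 unfolding C_def by linarith
  have CF: "\<bar>f i (R t)\<bar> \<le> C" if "t \<in> {0..t1}" for t i using BF[OF that, of i] BR0 BT0 BG0 unfolding C_def by linarith
  have CG: "\<bar>g i (T t)\<bar> \<le> C" if "t \<in> {0..t1}" for t i using BG[OF that, of i] BR0 BT0 BF0 unfolding C_def by linarith
  define Lf where "Lf = norm (\<chi> i. f i (- 1))"
  define Lg where "Lg = norm (\<chi> i. g i (- 1))"
  have Lf: "- f i (- 1) \<le> Lf" for i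
    using component_le_norm_cart[of "\<chi> i. f i (- 1)" i] unfolding Lf_def by simp
  have Lg: "- g i (- 1) \<le> Lg" for i
    using component_le_norm_cart[of "\<chi> i. g i (- 1)" i] unfolding Lg_def by simp
  have Lf0: "Lf \<ge> 0" and Lg0: "Lg \<ge> 0" by (simp_all add: Lf_def Lg_def)
  have flow: "f i x \<ge> - (Lf * \<eta>)" if "\<And>k. x$k \<ge> -\<eta>" "0 \<le> \<eta>" "\<eta> \<le> 1" for i x \<eta>
  proof -
    have "f i (\<eta> *\<^sub>R (- 1)) \<le> f i x" using that by (intro fmono) simp
    moreover have "f i (\<eta> *\<^sub>R (- 1)) \<ge> \<eta> * f i (- 1)" using concave_scale[OF fconc f0 that(2,3)] .
    moreover have "\<eta> * f i (- 1) \<ge> - (Lf * \<eta>)"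
    proof -
      have "\<eta> * (- f i (- 1)) \<le> \<eta> * Lf" using Lf[of i] that(2) by (rule mult_left_mono)
      thus ?thesis by (simp add: algebra_simps)
    qed
    ultimately show ?thesis by linarith
  qed
  have glow: "g i x \<ge> - (Lg * \<eta>)" if "\<And>k. x$k \<ge> -\<eta>" "0 \<le> \<eta>" "\<eta> \<le> 1" for i x \<eta>
  proof -
    have "g i (\<eta> *\<^sub>R (- 1)) \<le> g i x" using that by (intro gmono) simp
    moreover have "g i (\<eta> *\<^sub>R (- 1)) \<ge> \<eta> * g i (- 1)" using concave_scale[OF gconc g0 that(2,3)] .
    moreover have "\<eta> * g i (- 1) \<ge> - (Lg * \<eta>)"
    proof -
      have "\<eta> * (- g i (- 1)) \<le> \<eta> * Lg" using Lg[of i] that(2) by (rule mult_left_mono)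
      thus ?thesis by (simp add: algebra_simps)
    qed
    ultimately show ?thesis by linarith
  qed
  define M where "M = C*(1+Lf) + C*(1+Lg) + 2*C + (\<Sum>i\<in>UNIV. \<theta> i) + (\<Sum>i\<in>UNIV. \<delta> i)"
  have th_le: "\<theta> i \<le> (\<Sum>i\<in>UNIV. \<theta> i)" for i using theta_pos by (intro member_le_sum) (auto intro: less_imp_le)
  have de_le: "\<delta> i \<le> (\<Sum>i\<in>UNIV. \<delta> i)" for i using delta_pos by (intro member_le_sum) (auto intro: less_imp_le)
  define L where "L = M + 1"
  define y where "y k t = (if snd k = (0::nat) then R t $ fst k else if snd k = 1 then T t $ fst k
      else 1 - R t $ fst k - T t $ fst k)" for k t
  define K where "K = (UNIV :: 'n set) \<times> {0::nat, 1, 2}"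
  have main: "y k t1 > - (\<epsilon> * exp (L * t1))" if eps: "\<epsilon> > 0" "\<epsilon> * exp (L * t1) \<le> 1" and kK: "k \<in> K" for \<epsilon> k
  proof -
    define h where "h k t = y k t + \<epsilon> * exp (L * t)" for k t
    have "h k t1 > 0"
    proof (rule barrier[of K 0 t1 h])
      show "finite K" by (simp add: K_def)
      show "0 \<le> t1" using t1 .
      show "k \<in> K" using kK .
      show "0 \<le> t1" "t1 \<le> t1" using t1 by auto
    next
      fix k assume "k \<in> K"
      have cR: "continuous_on {0..t1} (\<lambda>x. R x $ i)" for i using Rc by (rule continuous_on_component)
      have cT: "continuous_on {0..t1} (\<lambda>x. T x $ i)" for i using Tc by (rule continuous_on_component)
      show "continuous_on {0..t1} (h k)" unfolding h_def y_def
        by (cases "snd k = 0"; cases "snd k = 1") (auto intro!: continuous_intros cR cT)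
    next
      fix k assume "k \<in> K"
      show "h k 0 > 0" using init_Omega[of "fst k"] eps unfolding h_def y_def by auto
    next
      fix k t assume kK: "k \<in> K" and t: "0 < t" "t \<le> t1"
        and nn: "\<And>j s. j \<in> K \<Longrightarrow> 0 \<le> s \<Longrightarrow> s \<le> t \<Longrightarrow> h j s \<ge> 0" and z: "h k t = 0"
      define \<eta> where "\<eta> = \<epsilon> * exp (L * t)"
      have \<eta>0: "\<eta> > 0" using eps by (simp add: \<eta>_def)
      have sth: "(\<Sum>i\<in>UNIV. \<theta> i) \<ge> 0" using theta_pos by (intro sum_nonneg) (auto intro: less_imp_le)
      have sde: "(\<Sum>i\<in>UNIV. \<delta> i) \<ge> 0" using delta_pos by (intro sum_nonneg) (auto intro: less_imp_le)
      have "M \<ge> 0" unfolding M_def using C0 Lf0 Lg0 sth sde by simp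
      hence "L * t \<le> L * t1" using t unfolding L_def by (intro mult_left_mono) auto
      hence "exp (L * t) \<le> exp (L * t1)" by simp
      hence \<eta>1: "\<eta> \<le> 1" using eps unfolding \<eta>_def by (meson mult_left_mono less_imp_le order_trans)
      have tin: "t \<in> {0..t1}" using t by auto
      have lbR: "R t $ j \<ge> -\<eta>" for j using nn[of "(j,0)" t] t by (simp add: K_def h_def y_def \<eta>_def)
      have lbT: "T t $ j \<ge> -\<eta>" for j using nn[of "(j,1)" t] t by (simp add: K_def h_def y_def \<eta>_def)
      have lbW: "1 - R t $ j - T t $ j \<ge> -\<eta>" for j using nn[of "(j,2)" t] t by (simp add: K_def h_def y_def \<eta>_def)
      have fl: "f j (R t) \<ge> - (Lf * \<eta>)" for j using flow[OF lbR] \<eta>0 \<eta>1 by simp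
      have gl: "g j (T t) \<ge> - (Lg * \<eta>)" for j using glow[OF lbT] \<eta>0 \<eta>1 by simp
      obtain i m where km: "k = (i, m)" by force
      have ym: "y k t = - \<eta>" using z by (simp add: h_def \<eta>_def)
      have sth: "(\<Sum>i\<in>UNIV. \<theta> i) \<ge> 0" using theta_pos by (intro sum_nonneg) (auto intro: less_imp_le)
      have sde: "(\<Sum>i\<in>UNIV. \<delta> i) \<ge> 0" using delta_pos by (intro sum_nonneg) (auto intro: less_imp_le)
      have Mge: "M \<ge> C*(1+Lf) + C" "M \<ge> C*(1+Lg) + C + (\<Sum>i\<in>UNIV. \<delta> i)" "M \<ge> (\<Sum>i\<in>UNIV. \<theta> i)"
        unfolding M_def using C0 Lf0 Lg0 sth sde by simp_all
      have CM1: "C*(1+Lf)*\<eta> + C*\<eta> \<le> M*\<eta>" using Mge(1) \<eta>0 by (simp add: distrib_right[symmetric] mult_right_mono)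
      have CM2: "C*(1+Lg)*\<eta> + C*\<eta> + (\<Sum>i\<in>UNIV. \<delta> i)*\<eta> \<le> M*\<eta>" using Mge(2) \<eta>0
        by (simp add: distrib_right[symmetric] mult_right_mono)
      have CM3: "(\<Sum>i\<in>UNIV. \<theta> i)*\<eta> \<le> M*\<eta>" using Mge(3) \<eta>0 by (simp add: mult_right_mono)
      have m3: "m = 0 \<or> m = 1 \<or> m = 2" using kK km by (auto simp: K_def)
      have "\<exists>Dy. ((y k) has_real_derivative Dy) (at t) \<and> Dy \<ge> - M * \<eta>"
      proof (cases "m = 0")
        case True
        have yk: "y k = (\<lambda>t. R t $ i)" using True km by (auto simp: y_def fun_eq_iff)
        have Ri: "R t $ i = - \<eta>" using ym yk by simp
        have p1: "T t $ i * f i (R t) \<ge> -(C*(1+Lf))*\<eta>"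
          by (rule prod_lb[OF lbT _ CT[OF tin] CF[OF tin] less_imp_le[OF \<eta>0] Lf0]) (use fl in simp)
        have p2: "- (R t $ i * g i (T t)) \<ge> - (C * \<eta>)"
        proof -
          have "\<eta> * (- g i (T t)) \<le> \<eta> * C" using CG[OF tin, of i] \<eta>0 by (intro mult_left_mono) auto
          thus ?thesis using Ri by (simp add: algebra_simps)
        qed
        have p3: "- (\<theta> i * R t $ i) \<ge> 0" using Ri \<eta>0 theta_pos[of i] by simp
        show ?thesis
          by (rule exI[of _ "dR t $ i"], rule conjI, unfold yk, rule Rd[OF t(1)])
             (use p1 p2 p3 CM1 in \<open>simp add: dR_def algebra_simps\<close>)
      next
        case m0: False
        show ?thesis
        proof (cases "m = 1")
          case True
          have yk: "y k = (\<lambda>t. T t $ i)" using True km by (auto simp: y_def fun_eq_iff)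
          have Ti: "T t $ i = - \<eta>" using ym yk by simp
          have p1: "R t $ i * g i (T t) \<ge> -(C*(1+Lg))*\<eta>"
            by (rule prod_lb[OF lbR _ CR[OF tin] CG[OF tin] less_imp_le[OF \<eta>0] Lg0]) (use gl in simp)
          have p2: "- (T t $ i * f i (R t)) \<ge> - (C * \<eta>)"
          proof -
            have "\<eta> * (- f i (R t)) \<le> \<eta> * C" using CF[OF tin, of i] \<eta>0 by (intro mult_left_mono) auto
            thus ?thesis using Ti by (simp add: algebra_simps)
          qed
          have p3: "\<delta> i * (1 - R t $ i - T t $ i) \<ge> - ((\<Sum>i\<in>UNIV. \<delta> i) * \<eta>)"
          proof -
            have "\<delta> i * (-\<eta>) \<le> \<delta> i * (1 - R t $ i - T t $ i)"
              using lbW[of i] delta_pos[of i] by (intro mult_left_mono) auto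
            moreover have "\<delta> i * \<eta> \<le> (\<Sum>i\<in>UNIV. \<delta> i) * \<eta>" using de_le[of i] \<eta>0 by (simp add: mult_right_mono)
            ultimately show ?thesis by simp
          qed
          show ?thesis
            by (rule exI[of _ "dT t $ i"], rule conjI, unfold yk, rule Td[OF t(1)])
               (use p1 p2 p3 CM2 in \<open>simp add: dT_def algebra_simps\<close>)
        next
          case False
          hence m2: "m \<noteq> 0" "m \<noteq> 1" using m0 by auto
          have yk: "y k = (\<lambda>t. 1 - R t $ i - T t $ i)" using m2 km by (auto simp: y_def fun_eq_iff)
          have Wi: "1 - R t $ i - T t $ i = - \<eta>" using ym yk by simp
          have d: "((\<lambda>t. 1 - R t $ i - T t $ i) has_real_derivative 0 - dR t $ i - dT t $ i) (at t)"
            by (intro DERIV_diff DERIV_const Rd[OF t(1)] Td[OF t(1)])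
          have eq: "0 - dR t $ i - dT t $ i = \<theta> i * R t $ i - \<delta> i * (1 - R t $ i - T t $ i)"
            by (simp add: dR_def dT_def algebra_simps)
          have p1: "\<theta> i * R t $ i \<ge> - ((\<Sum>i\<in>UNIV. \<theta> i) * \<eta>)"
          proof -
            have "\<theta> i * (-\<eta>) \<le> \<theta> i * R t $ i"
              using lbR[of i] theta_pos[of i] by (intro mult_left_mono) auto
            moreover have "\<theta> i * \<eta> \<le> (\<Sum>i\<in>UNIV. \<theta> i) * \<eta>" using th_le[of i] \<eta>0 by (simp add: mult_right_mono)
            ultimately show ?thesis by simp
          qed
          have p2: "- (\<delta> i * (1 - R t $ i - T t $ i)) \<ge> 0" using Wi \<eta>0 delta_pos[of i] by simp
          show ?thesis
            by (rule exI[of _ "0 - dR t $ i - dT t $ i"], rule conjI, unfold yk, rule d)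
               (use p1 p2 CM3 eq in simp)
        qed
      qed
      then obtain Dy where Dy: "((y k) has_real_derivative Dy) (at t)" "Dy \<ge> - M * \<eta>" by blast
      have e: "((\<lambda>t. \<epsilon> * exp (L * t)) has_real_derivative \<epsilon> * (exp (L * t) * L)) (at t)"
        by (auto intro!: derivative_eq_intros)
      have "(h k has_real_derivative Dy + \<epsilon> * (exp (L * t) * L)) (at t)"
        unfolding h_def using DERIV_add[OF Dy(1) e] by simp
      moreover have "Dy + \<epsilon> * (exp (L * t) * L) > 0"
      proof -
        have "\<epsilon> * (exp (L * t) * L) = L * \<eta>" by (simp add: \<eta>_def)
        thus ?thesis using Dy(2) \<eta>0 unfolding L_def by (simp add: algebra_simps)
      qed
      ultimately show "\<exists>D>0. (h k has_real_derivative D) (at t)" by blast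
    qed
    thus ?thesis by (simp add: h_def)
  qed
  have "y k t1 \<ge> 0" if kK: "k \<in> K" for k
  proof (rule ccontr)
    assume "\<not> y k t1 \<ge> 0"
    hence neg: "y k t1 < 0" by simp
    define \<epsilon> where "\<epsilon> = min 1 (- y k t1 / 2) * exp (- (L * t1))"
    have m0: "min 1 (- y k t1 / 2) > 0" using neg by simp
    have e0: "\<epsilon> > 0" using m0 by (simp add: \<epsilon>_def)
    have ee: "\<epsilon> * exp (L * t1) = min 1 (- y k t1 / 2)" by (simp add: \<epsilon>_def exp_minus field_simps)
    have "y k t1 > - (\<epsilon> * exp (L * t1))" using main[OF e0 _ kK] ee by simp
    moreover have "min 1 (- y k t1 / 2) \<le> - y k t1 / 2" by simp
    ultimately show False using ee neg by linarith
  qed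
  from this[of "(i0,0)"] this[of "(i0,1)"] this[of "(i0,2)"]
  show ?thesis by (simp add: K_def y_def)
qed

lemma positivity:
  fixes f g :: "'n::finite \<Rightarrow> real^'n \<Rightarrow> real" and R T :: "real \<Rightarrow> real^'n"
    and \<theta> :: "'n \<Rightarrow> real"
  assumes theta_pos: "\<And>i. \<theta> i > 0"
    and fmono: "\<And>i x y. (\<And>k. x$k \<le> y$k) \<Longrightarrow> f i x \<le> f i y"
    and gmono: "\<And>i x y. (\<And>k. x$k \<le> y$k) \<Longrightarrow> g i x \<le> g i y"
    and f0: "\<And>i. f i 0 = 0"
    and ode_R: "\<And>t. t \<ge> 0 \<Longrightarrow> (R has_vector_derivative
        (\<chi> i. T t $ i * f i (R t) - R t $ i * g i (T t) - \<theta> i * R t $ i)) (at t within {0..})"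
    and inv: "\<And>t i. t \<ge> 0 \<Longrightarrow> R t $ i \<ge> 0 \<and> T t $ i \<ge> 0 \<and> R t $ i + T t $ i \<le> 1"
    and init_R_pos: "\<And>i. R 0 $ i > 0"
    and t1: "t1 \<ge> 0"
  shows "R t1 $ i0 > 0"
proof -
  define dR where "dR t = (\<chi> i. T t $ i * f i (R t) - R t $ i * g i (T t) - \<theta> i * R t $ i)" for t
  have odeR: "\<And>t. t \<ge> 0 \<Longrightarrow> (R has_vector_derivative dR t) (at t within {0..})" using ode_R by (simp add: dR_def)
  have Rd: "\<And>t i. t > 0 \<Longrightarrow> ((\<lambda>t. R t $ i) has_real_derivative dR t $ i) (at t)" by (rule ode_deriv[OF odeR])
  have Rc: "continuous_on {0..t1} (\<lambda>t. R t $ i)" for i using ode_cont_comp[OF odeR] by (rule continuous_on_subset) auto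
  define C where "C = 1 + (\<Sum>i\<in>UNIV. \<bar>g i 1\<bar>) + (\<Sum>i\<in>UNIV. \<theta> i)"
  have gle: "g i (T t) + \<theta> i \<le> C" if "t \<ge> 0" for i t
  proof -
    have "g i (T t) \<le> g i 1" using inv[OF that] by (intro gmono) (simp, smt (verit))
    moreover have "\<bar>g i 1\<bar> \<le> (\<Sum>i\<in>UNIV. \<bar>g i 1\<bar>)" by (rule member_le_sum) auto
    moreover have "\<theta> i \<le> (\<Sum>i\<in>UNIV. \<theta> i)" using theta_pos by (intro member_le_sum) (auto intro: less_imp_le)
    ultimately show ?thesis unfolding C_def by linarith
  qed
  have C1: "C \<ge> 1" unfolding C_def using theta_pos
    by (smt (verit) sum_nonneg abs_ge_zero less_imp_le)
  define \<rho> where "\<rho> = Min (range (\<lambda>i. R 0 $ i)) / 2"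
  have Mpos: "Min (range (\<lambda>i. R 0 $ i)) > 0" using init_R_pos by (simp add: Min_gr_iff)
  have \<rho>0: "\<rho> > 0" using Mpos by (simp add: \<rho>_def)
  have \<rho>le: "\<rho> < R 0 $ i" for i
  proof -
    have "Min (range (\<lambda>i. R 0 $ i)) \<le> R 0 $ i" by (rule Min_le) auto
    thus ?thesis using Mpos unfolding \<rho>_def by linarith
  qed
  define h where "h i t = R t $ i - \<rho> * exp (- (2*C) * t)" for i t
  have "h i0 t1 > 0"
  proof (rule barrier[of UNIV 0 t1 h])
    fix k :: 'n
    show "continuous_on {0..t1} (h k)" unfolding h_def by (intro continuous_intros Rc)
    show "h k 0 > 0" using \<rho>le[of k] by (simp add: h_def)
  next
    fix k t assume t: "0 < t" "t \<le> t1" and nn: "\<And>j s. j \<in> UNIV \<Longrightarrow> 0 \<le> s \<Longrightarrow> s \<le> t \<Longrightarrow> h j s \<ge> 0"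
      and z: "h k t = 0"
    define e where "e = \<rho> * exp (- (2*C) * t)"
    have e0: "e > 0" using \<rho>0 by (simp add: e_def)
    have Rk: "R t $ k = e" using z by (simp add: h_def e_def)
    have tf: "T t $ k * f k (R t) \<ge> 0"
    proof -
      have "f k (R t) \<ge> f k 0" using inv t by (intro fmono) auto
      thus ?thesis using inv[of t k] t f0 by simp
    qed
    have "R t $ k * (g k (T t) + \<theta> k) \<le> R t $ k * C" using gle[of t k] t Rk e0 by (intro mult_left_mono) auto
    hence dRk: "dR t $ k \<ge> - (C * e)" using tf Rk by (simp add: dR_def algebra_simps)
    have ed: "((\<lambda>t. \<rho> * exp (- (2*C) * t)) has_real_derivative \<rho> * (exp (- (2*C) * t) * (- (2*C)))) (at t)"
      by (auto intro!: derivative_eq_intros)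
    have d: "(h k has_real_derivative dR t $ k - \<rho> * (exp (- (2*C) * t) * (- (2*C)))) (at t)"
      unfolding h_def using DERIV_diff[OF Rd[OF t(1)] ed] by simp
    have "dR t $ k - \<rho> * (exp (- (2*C) * t) * (- (2*C))) = dR t $ k + 2 * C * e" by (simp add: e_def)
    moreover have "C * e > 0" using C1 e0 by simp
    ultimately have "dR t $ k - \<rho> * (exp (- (2*C) * t) * (- (2*C))) > 0" using dRk by linarith
    thus "\<exists>D>0. (h k has_real_derivative D) (at t)" using d by blast
  qed (use t1 in auto)
  thus ?thesis using \<rho>0 unfolding h_def by (smt (verit) exp_gt_zero mult_pos_pos)
qed

lemma Sbound:
  fixes f g :: "'n::finite \<Rightarrow> real^'n \<Rightarrow> real" and R T :: "real \<Rightarrow> real^'n"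
    and \<theta> \<delta> :: "'n \<Rightarrow> real"
  assumes theta_pos: "\<And>i. \<theta> i > 0" and delta_pos: "\<And>i. \<delta> i > 0"
    and ode_R: "\<And>t. t \<ge> 0 \<Longrightarrow> (R has_vector_derivative
        (\<chi> i. T t $ i * f i (R t) - R t $ i * g i (T t) - \<theta> i * R t $ i)) (at t within {0..})"
    and ode_T: "\<And>t. t \<ge> 0 \<Longrightarrow> (T has_vector_derivative
        (\<chi> i. R t $ i * g i (T t) - T t $ i * f i (R t) + \<delta> i * (1 - R t $ i - T t $ i))) (at t within {0..})"
    and inv: "\<And>t i. t \<ge> 0 \<Longrightarrow> R t $ i \<ge> 0 \<and> T t $ i \<ge> 0 \<and> R t $ i + T t $ i \<le> 1"
    and t1: "t1 \<ge> 0"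
  shows "R t1 $ i0 + T t1 $ i0 > \<delta> i0 / (\<theta> i0 + \<delta> i0) - 2 * exp (- ((\<theta> i0 + \<delta> i0) / 2) * t1)"
proof -
  define dR where "dR t = (\<chi> i. T t $ i * f i (R t) - R t $ i * g i (T t) - \<theta> i * R t $ i)" for t
  define dT where "dT t = (\<chi> i. R t $ i * g i (T t) - T t $ i * f i (R t) + \<delta> i * (1 - R t $ i - T t $ i))" for t
  have odeR: "\<And>t. t \<ge> 0 \<Longrightarrow> (R has_vector_derivative dR t) (at t within {0..})" using ode_R by (simp add: dR_def)
  have odeT: "\<And>t. t \<ge> 0 \<Longrightarrow> (T has_vector_derivative dT t) (at t within {0..})" using ode_T by (simp add: dT_def)
  have Rd: "\<And>t i. t > 0 \<Longrightarrow> ((\<lambda>t. R t $ i) has_real_derivative dR t $ i) (at t)" by (rule ode_deriv[OF odeR])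
  have Td: "\<And>t i. t > 0 \<Longrightarrow> ((\<lambda>t. T t $ i) has_real_derivative dT t $ i) (at t)" by (rule ode_deriv[OF odeT])
  have Rc: "continuous_on {0..t1} (\<lambda>t. R t $ i)" for i using ode_cont_comp[OF odeR] by (rule continuous_on_subset) auto
  have Tc: "continuous_on {0..t1} (\<lambda>t. T t $ i)" for i using ode_cont_comp[OF odeT] by (rule continuous_on_subset) auto
  define c where "c i = \<theta> i + \<delta> i" for i
  define a where "a i = \<delta> i / c i" for i
  have c0: "c i > 0" for i using theta_pos[of i] delta_pos[of i] by (simp add: c_def)
  have a1: "a i < 1" for i using theta_pos[of i] c0[of i] unfolding a_def c_def by (simp add: field_simps)
  have ac: "a i * c i = \<delta> i" for i using c0[of i] by (simp add: a_def)
  define h where "h i t = R t $ i + T t $ i - a i + 2 * exp (- (c i / 2) * t)" for i t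
  have "h i0 t1 > 0"
  proof (rule barrier[of UNIV 0 t1 h])
    fix k :: 'n
    show "continuous_on {0..t1} (h k)" unfolding h_def by (intro continuous_intros Rc Tc)
    show "h k 0 > 0" using inv[of 0 k] a1[of k] by (simp add: h_def)
  next
    fix k t assume t: "0 < t" "t \<le> t1" and z: "h k t = 0"
    define e where "e = exp (- (c k / 2) * t)"
    have e0: "e > 0" by (simp add: e_def)
    have S: "R t $ k + T t $ k = a k - 2 * e" using z by (simp add: h_def e_def)
    have ed: "((\<lambda>t. 2 * exp (- (c k / 2) * t)) has_real_derivative 2 * (exp (- (c k / 2) * t) * (- (c k / 2)))) (at t)"
      by (auto intro!: derivative_eq_intros)
    have d: "(h k has_real_derivative dR t $ k + dT t $ k - 0 + 2 * (exp (- (c k / 2) * t) * (- (c k / 2)))) (at t)"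
      unfolding h_def using DERIV_add[OF DERIV_diff[OF DERIV_add[OF Rd[OF t(1)] Td[OF t(1)]] DERIV_const] ed] by simp
    have eq: "dR t $ k + dT t $ k = - \<theta> k * R t $ k + \<delta> k * (1 - R t $ k - T t $ k)"
      by (simp add: dR_def dT_def algebra_simps)
    have "\<theta> k * R t $ k \<le> \<theta> k * (R t $ k + T t $ k)" using inv[of t k] t theta_pos[of k]
      by (intro mult_left_mono) auto
    hence "dR t $ k + dT t $ k \<ge> \<delta> k - c k * (R t $ k + T t $ k)" unfolding eq c_def by (simp add: algebra_simps)
    also have "\<delta> k - c k * (R t $ k + T t $ k) = 2 * c k * e" unfolding S using ac[of k] by (simp add: algebra_simps)
    finally have "dR t $ k + dT t $ k - 0 + 2 * (exp (- (c k / 2) * t) * (- (c k / 2))) \<ge> c k * e"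
      by (simp add: e_def)
    moreover have "c k * e > 0" using c0 e0 by simp
    ultimately show "\<exists>D>0. (h k has_real_derivative D) (at t)" using d by (intro exI[of _ "dR t $ k + dT t $ k - 0 + 2 * (exp (- (c k / 2) * t) * (- (c k / 2)))"]) auto
  qed (use t1 in auto)
  thus ?thesis unfolding h_def a_def c_def by simp
qed

lemma persistence:
  fixes f g :: "'n::finite \<Rightarrow> real^'n \<Rightarrow> real" and R T :: "real \<Rightarrow> real^'n"
    and \<theta> \<delta> :: "'n \<Rightarrow> real" and Gf :: "'n \<Rightarrow> real^'n" and u :: "real^'n"
  assumes theta_pos: "\<And>i. \<theta> i > 0" and delta_pos: "\<And>i. \<delta> i > 0"
    and fmono: "\<And>i x y. (\<And>k. x$k \<le> y$k) \<Longrightarrow> f i x \<le> f i y"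
    and gmono: "\<And>i x y. (\<And>k. x$k \<le> y$k) \<Longrightarrow> g i x \<le> g i y"
    and f0: "\<And>i. f i 0 = 0"
    and fder: "\<And>i. (f i has_derivative (\<lambda>h. Gf i \<bullet> h)) (at 0)"
    and ode_R: "\<And>t. t \<ge> 0 \<Longrightarrow> (R has_vector_derivative
        (\<chi> i. T t $ i * f i (R t) - R t $ i * g i (T t) - \<theta> i * R t $ i)) (at t within {0..})"
    and inv: "\<And>t i. t \<ge> 0 \<Longrightarrow> R t $ i \<ge> 0 \<and> T t $ i \<ge> 0 \<and> R t $ i + T t $ i \<le> 1"
    and Rpos: "\<And>t i. t \<ge> 0 \<Longrightarrow> R t $ i > 0"
    and Sb: "\<And>t i. t \<ge> 0 \<Longrightarrow> R t $ i + T t $ i > \<delta> i / (\<theta> i + \<delta> i) - 2 * exp (- ((\<theta> i + \<delta> i) / 2) * t)"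
    and upos: "\<And>i. u$i > 0" and Jnn: "\<And>i. Gf i \<bullet> u \<ge> 0"
    and spos: "s > 0"
    and Qu: "\<And>i. \<delta> i / (\<theta> i + \<delta> i) * (Gf i \<bullet> u) - (\<theta> i + g i 1) * u$i \<ge> s * u$i"
  shows "\<exists>c>0. \<forall>i. Liminf at_top (\<lambda>t. ereal (R t $ i)) \<ge> ereal c"
proof -
  define dR where "dR t = (\<chi> i. T t $ i * f i (R t) - R t $ i * g i (T t) - \<theta> i * R t $ i)" for t
  have odeR: "\<And>t. t \<ge> 0 \<Longrightarrow> (R has_vector_derivative dR t) (at t within {0..})" using ode_R by (simp add: dR_def)
  have Rd: "\<And>t i. t > 0 \<Longrightarrow> ((\<lambda>t. R t $ i) has_real_derivative dR t $ i) (at t)" by (rule ode_deriv[OF odeR])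
  have Rc: "continuous_on {0..} (\<lambda>t. R t $ i)" for i using ode_cont_comp[OF odeR] .
  define a where "a i = \<delta> i / (\<theta> i + \<delta> i)" for i
  define c where "c i = \<theta> i + \<delta> i" for i
  define Ju where "Ju i = Gf i \<bullet> u" for i
  have c0: "c i > 0" for i using theta_pos[of i] delta_pos[of i] by (simp add: c_def)
  have a0: "a i > 0" for i using delta_pos[of i] c0[of i] by (simp add: a_def c_def)
  have a1: "a i < 1" for i using theta_pos[of i] c0[of i] unfolding a_def c_def by (simp add: field_simps)
  define \<nu>f where "\<nu>f i = min (a i / 2) (s * u$i / (2 * (2 * Ju i + 1)))" for i
  define \<nu> where "\<nu> = Min (range \<nu>f)"
  have \<nu>fpos: "\<nu>f i > 0" for i using a0[of i] spos upos[of i] Jnn[of i] by (simp add: \<nu>f_def Ju_def)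
  have \<nu>0: "\<nu> > 0" unfolding \<nu>_def using \<nu>fpos by (simp add: Min_gr_iff)
  have \<nu>le: "\<nu> \<le> \<nu>f i" for i unfolding \<nu>_def by (rule Min_le) auto
  have \<nu>a: "\<nu> \<le> a i / 2" for i using \<nu>le[of i] by (simp add: \<nu>f_def)
  have \<nu>s: "\<nu> * (2 * Ju i + 1) < s * u$i" for i
  proof -
    have p: "2 * Ju i + 1 > 0" using Jnn[of i] by (simp add: Ju_def)
    have "\<nu> \<le> s * u$i / (2 * (2 * Ju i + 1))" using \<nu>le[of i] by (simp add: \<nu>f_def)
    hence "\<nu> * (2 * Ju i + 1) \<le> s * u$i / 2" using p by (simp add: field_simps)
    moreover have "s * u$i > 0" using spos upos[of i] by simp
    ultimately show ?thesis by linarith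
  qed
  have ev: "eventually (\<lambda>\<eta>. \<forall>i. f i (\<eta> *\<^sub>R u) / \<eta> > Ju i - \<nu>) (at_right 0)"
  proof (rule eventually_all_finite)
    fix i
    have "((\<lambda>t. f i (t *\<^sub>R u) / t) \<longlongrightarrow> Ju i) (at_right 0)"
      using dir_quot[OF fder f0] unfolding Ju_def by (rule filterlim_mono) (simp_all add: at_le)
    thus "eventually (\<lambda>\<eta>. f i (\<eta> *\<^sub>R u) / \<eta> > Ju i - \<nu>) (at_right 0)"
      by (rule order_tendstoD(1)) (use \<nu>0 in simp)
  qed
  then obtain \<eta>1 where \<eta>1: "\<eta>1 > 0" "\<And>\<eta> i. 0 < \<eta> \<Longrightarrow> \<eta> < \<eta>1 \<Longrightarrow> f i (\<eta> *\<^sub>R u) / \<eta> > Ju i - \<nu>"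
    unfolding eventually_at_right_field by auto
  have flin: "f i (\<eta> *\<^sub>R u) \<ge> \<eta> * (Ju i - \<nu>)" if "0 < \<eta>" "\<eta> < \<eta>1" for \<eta> i
    using \<eta>1(2)[OF that, of i] that(1) by (simp add: pos_less_divide_eq mult.commute less_imp_le)
  define t0 where "t0 = 1 + (\<Sum>i\<in>UNIV. 2 * \<bar>ln (\<nu> / 2)\<bar> / c i)"
  have t0pos: "t0 > 0" unfolding t0_def using c0 by (smt (verit) sum_nonneg divide_nonneg_pos abs_ge_zero)
  have expb: "2 * exp (- (c i / 2) * t) \<le> \<nu>" if "t \<ge> t0" for i t
  proof -
    have "2 * \<bar>ln (\<nu> / 2)\<bar> / c i \<le> (\<Sum>i\<in>UNIV. 2 * \<bar>ln (\<nu> / 2)\<bar> / c i)"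
      using c0 by (intro member_le_sum) (auto intro: divide_nonneg_pos)
    hence "t \<ge> 2 * \<bar>ln (\<nu> / 2)\<bar> / c i" using that unfolding t0_def by linarith
    hence "(c i / 2) * t \<ge> \<bar>ln (\<nu> / 2)\<bar>" using c0[of i] by (simp add: field_simps)
    hence "- (c i / 2) * t \<le> ln (\<nu> / 2)" by linarith
    hence "exp (- (c i / 2) * t) \<le> exp (ln (\<nu> / 2))" by simp
    thus ?thesis using \<nu>0 by simp
  qed
  have Tlb: "T t $ i \<ge> a i - \<nu> - R t $ i" if "t \<ge> t0" for i t
    using Sb[of t i] expb[OF that, of i] that t0pos unfolding a_def c_def by linarith
  define r where "r = Min (range (\<lambda>i. R t0 $ i / u$i))"
  define Mu where "Mu = Max (range (\<lambda>i. u$i))"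
  have r0: "r > 0" unfolding r_def using Rpos[of t0] t0pos upos by (simp add: Min_gr_iff)
  have rle: "r \<le> R t0 $ i / u$i" for i unfolding r_def by (rule Min_le) auto
  have Mu: "u$i \<le> Mu" for i unfolding Mu_def by (rule Max_ge) auto
  have Mu0: "Mu > 0" using Mu[of undefined] upos[of undefined] by linarith
  define \<eta> where "\<eta> = min (\<eta>1 / 2) (min (\<nu> / (2 * Mu)) (r / 2))"
  have \<eta>0: "\<eta> > 0" using \<eta>1(1) \<nu>0 Mu0 r0 by (simp add: \<eta>_def)
  have \<eta>\<eta>1: "\<eta> < \<eta>1" using \<eta>1(1) by (simp add: \<eta>_def)
  have \<eta>u: "\<eta> * u$i \<le> \<nu>" for i
  proof -
    have "\<eta> \<le> \<nu> / (2 * Mu)" by (simp add: \<eta>_def)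
    hence "\<eta> * u$i \<le> \<nu> / (2 * Mu) * Mu" using Mu[of i] upos[of i] \<eta>0
      by (meson less_imp_le mult_mono order_trans)
    also have "\<dots> = \<nu> / 2" using Mu0 by simp
    finally show ?thesis using \<nu>0 by simp
  qed
  have \<eta>R: "\<eta> * u$i < R t0 $ i" for i
  proof -
    have "\<eta> < r" using r0 by (simp add: \<eta>_def)
    hence "\<eta> < R t0 $ i / u$i" using rle[of i] by linarith
    thus ?thesis using upos[of i] by (simp add: pos_less_divide_eq)
  qed
  have key: "R t $ i > \<eta> * u$i" if "t \<ge> t0" for t i
  proof -
    define h where "h i t = R t $ i - \<eta> * u$i" for i t
    have "h i t > 0"
    proof (rule barrier[of UNIV t0 t h])
      fix k :: 'n
      have "continuous_on {t0..t} (\<lambda>t. R t $ k)" using Rc[of k] by (rule continuous_on_subset) (use t0pos in auto)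
      thus "continuous_on {t0..t} (h k)" unfolding h_def by (intro continuous_on_diff continuous_on_const)
      show "h k t0 > 0" using \<eta>R[of k] by (simp add: h_def)
    next
      fix k t' assume t': "t0 < t'" "t' \<le> t"
        and nn: "\<And>j s. j \<in> UNIV \<Longrightarrow> t0 \<le> s \<Longrightarrow> s \<le> t' \<Longrightarrow> h j s \<ge> 0" and z: "h k t' = 0"
      have t'0: "t' > 0" using t' t0pos by linarith
      have Rge: "R t' $ j \<ge> \<eta> * u$j" for j using nn[of j t'] t' by (simp add: h_def)
      have Rk: "R t' $ k = \<eta> * u$k" using z by (simp add: h_def)
      define b where "b = a k - \<nu> - \<eta> * u$k"
      have b0: "b \<ge> 0" using \<nu>a[of k] \<eta>u[of k] by (simp add: b_def)
      have b1: "b \<le> 1"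
      proof -
        have "\<eta> * u$k > 0" using \<eta>0 upos[of k] by simp
        thus ?thesis using a1[of k] \<nu>0 unfolding b_def by linarith
      qed
      have Tb: "T t' $ k \<ge> b" using Tlb[of t' k] t' Rk by (simp add: b_def)
      have fR: "f k (R t') \<ge> f k (\<eta> *\<^sub>R u)" using Rge by (intro fmono) simp
      have fp: "f k (\<eta> *\<^sub>R u) \<ge> 0" using fmono[of 0 "\<eta> *\<^sub>R u" k] \<eta>0 upos f0 by (simp add: less_imp_le)
      have fl: "f k (\<eta> *\<^sub>R u) \<ge> \<eta> * (Ju k - \<nu>)" by (rule flin[OF \<eta>0 \<eta>\<eta>1])
      have "T t' $ k * f k (R t') \<ge> T t' $ k * f k (\<eta> *\<^sub>R u)"
        using fR Tb b0 by (intro mult_left_mono) auto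
      moreover have "T t' $ k * f k (\<eta> *\<^sub>R u) \<ge> b * f k (\<eta> *\<^sub>R u)"
        using fp Tb by (intro mult_right_mono) auto
      moreover have "b * f k (\<eta> *\<^sub>R u) \<ge> b * (\<eta> * (Ju k - \<nu>))"
        using fl b0 by (intro mult_left_mono) auto
      ultimately have TF: "T t' $ k * f k (R t') \<ge> \<eta> * (b * (Ju k - \<nu>))" by (simp add: algebra_simps)
      have "g k (T t') \<le> g k 1" using inv[of t'] t'0 by (intro gmono) (simp, smt (verit))
      hence RG: "R t' $ k * g k (T t') \<le> \<eta> * (u$k * g k 1)"
        using Rk \<eta>0 upos[of k] by (simp add: mult_left_mono)
      have dRk: "dR t' $ k \<ge> \<eta> * (b * (Ju k - \<nu>) - u$k * (g k 1 + \<theta> k))"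
        using TF RG Rk by (simp add: dR_def algebra_simps)
      have "b * \<nu> \<le> \<nu>" using b1 \<nu>0 by (simp add: mult_left_le_one_le less_imp_le)
      moreover have "(\<nu> + \<eta> * u$k) * Ju k \<le> (2 * \<nu>) * Ju k"
        using \<eta>u[of k] Jnn[of k] by (intro mult_right_mono) (auto simp: Ju_def)
      moreover have "a k * Ju k - u$k * (g k 1 + \<theta> k) \<ge> s * u$k"
        using Qu[of k] by (simp add: a_def Ju_def algebra_simps)
      moreover have "b * (Ju k - \<nu>) = a k * Ju k - (\<nu> + \<eta> * u$k) * Ju k - b * \<nu>"
        by (simp add: b_def algebra_simps)
      ultimately have "b * (Ju k - \<nu>) - u$k * (g k 1 + \<theta> k) \<ge> s * u$k - \<nu> * (2 * Ju k + 1)"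
        by (simp add: algebra_simps)
      hence X: "b * (Ju k - \<nu>) - u$k * (g k 1 + \<theta> k) > 0" using \<nu>s[of k] by linarith
      have "dR t' $ k > 0" using dRk X \<eta>0 by (smt (verit) mult_pos_pos)
      moreover have "(h k has_real_derivative dR t' $ k) (at t')"
        unfolding h_def using DERIV_diff[OF Rd[OF t'0] DERIV_const] by simp
      ultimately show "\<exists>D>0. (h k has_real_derivative D) (at t')" by blast
    qed (use that in auto)
    thus ?thesis by (simp add: h_def)
  qed
  define m where "m = Min (range (\<lambda>i. u$i))"
  have m0: "m > 0" unfolding m_def using upos by (simp add: Min_gr_iff)
  have mle: "m \<le> u$i" for i unfolding m_def by (rule Min_le) auto
  have "\<forall>i. Liminf at_top (\<lambda>t. ereal (R t $ i)) \<ge> ereal (\<eta> * m)"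
  proof
    fix i
    show "Liminf at_top (\<lambda>t. ereal (R t $ i)) \<ge> ereal (\<eta> * m)"
    proof (rule Liminf_bounded)
      show "eventually (\<lambda>t. ereal (\<eta> * m) \<le> ereal (R t $ i)) at_top"
        unfolding eventually_at_top_linorder
      proof (intro exI[of _ t0] allI impI)
        fix t assume "t \<ge> t0"
        have "\<eta> * m \<le> \<eta> * u$i" using mle[of i] \<eta>0 by simp
        thus "ereal (\<eta> * m) \<le> ereal (R t $ i)" using key[OF \<open>t \<ge> t0\<close>, of i] by simp
      qed
    qed
  qed
  thus ?thesis using \<eta>0 m0 by (intro exI[of _ "\<eta> * m"]) simp
qed

theorem theorem4:
  fixes E_R E_T :: "('n::finite \<times> 'n) set"
    and \<theta> \<delta> :: "'n \<Rightarrow> real"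
    and f g :: "'n \<Rightarrow> real^'n \<Rightarrow> real"
    and R T :: "real \<Rightarrow> real^'n"
  assumes conn_R: "strongly_connected E_R"
    and conn_T: "strongly_connected E_T"
    and theta_pos: "\<And>i. \<theta> i > 0"
    and delta_pos: "\<And>i. \<delta> i > 0"
    and C1_f: "\<And>i j. depends_on (f i) j \<longleftrightarrow> (i, j) \<in> E_R"
    and C1_g: "\<And>i j. depends_on (g i) j \<longleftrightarrow> (i, j) \<in> E_T"
    and C2_f: "\<And>i. f i 0 = 0"
    and C2_g: "\<And>i. g i 0 = 0"
    and C3_f: "\<And>i. C2 (f i)"
    and C3_g: "\<And>i. C2 (g i)"
    and C4_f: "\<And>i j. (i, j) \<in> E_R \<Longrightarrow> strict_incr_in (f i) j"
    and C4_g: "\<And>i j. (i, j) \<in> E_T \<Longrightarrow> strict_incr_in (g i) j"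
    and C5_f: "\<And>i. concave_on UNIV (f i)"
    and C5_g: "\<And>i. concave_on UNIV (g i)"
    and Q2_pos: "spectral_abscissa
        ((jacobian0 f - diag \<theta>)
         - diag (\<lambda>i. \<theta> i / (\<theta> i + \<delta> i)) ** jacobian0 f
         - diag (\<lambda>i. g i 1)) > 0"
    and ode_R: "\<And>t. t \<ge> 0 \<Longrightarrow> (R has_vector_derivative
        (\<chi> i. T t $ i * f i (R t) - R t $ i * g i (T t) - \<theta> i * R t $ i)) (at t within {0..})"
    and ode_T: "\<And>t. t \<ge> 0 \<Longrightarrow> (T has_vector_derivative
        (\<chi> i. R t $ i * g i (T t) - T t $ i * f i (R t) + \<delta> i * (1 - R t $ i - T t $ i))) (at t within {0..})"
    and init_Omega: "\<And>i. R 0 $ i \<ge> 0 \<and> T 0 $ i \<ge> 0 \<and> R 0 $ i + T 0 $ i \<le> 1"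
    and init_R_pos: "\<And>i. R 0 $ i > 0"
  shows "\<exists>c>0. \<forall>i. Liminf at_top (\<lambda>t. ereal (R t $ i)) \<ge> ereal c"
proof -
  have "\<forall>i. \<exists>G. \<forall>x. (f i has_derivative (\<lambda>h. G x \<bullet> h)) (at x)"
    using C3_f unfolding C2_def by metis
  then obtain Gf where Gf: "\<And>i x. (f i has_derivative (\<lambda>h. Gf i x \<bullet> h)) (at x)" by metis
  have "\<forall>i. \<exists>G. \<forall>x. (g i has_derivative (\<lambda>h. G x \<bullet> h)) (at x)"
    using C3_g unfolding C2_def by metis
  then obtain Gg where Gg: "\<And>i x. (g i has_derivative (\<lambda>h. Gg i x \<bullet> h)) (at x)" by metis
  have fcont: "continuous_on UNIV (f i)" for i
    unfolding continuous_on_eq_continuous_within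
    using Gf has_derivative_continuous has_derivative_at_withinI by blast
  have gcont: "continuous_on UNIV (g i)" for i
    unfolding continuous_on_eq_continuous_within
    using Gg has_derivative_continuous has_derivative_at_withinI by blast
  have fmono: "f i x \<le> f i y" if "\<And>k. x$k \<le> y$k" for i x y
  proof (rule mono_all[OF _ that])
    fix j and x' y' :: "real^'n" assume "\<forall>k. k \<noteq> j \<longrightarrow> x' $ k = y' $ k" "x' $ j \<le> y' $ j"
    thus "f i x' \<le> f i y'" by (rule weak_incr[rotated]) (use C1_f C4_f in blast)
  qed
  have gmono: "g i x \<le> g i y" if "\<And>k. x$k \<le> y$k" for i x y
  proof (rule mono_all[OF _ that])
    fix j and x' y' :: "real^'n" assume "\<forall>k. k \<noteq> j \<longrightarrow> x' $ k = y' $ k" "x' $ j \<le> y' $ j"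
    thus "g i x' \<le> g i y'" by (rule weak_incr[rotated]) (use C1_g C4_g in blast)
  qed
  define J where "J = jacobian0 f"
  have Jent: "J$i$j = Gf i 0 $ j" for i j unfolding J_def by (rule jac_entry[OF Gf])
  have Jge: "J$i$j \<ge> f i (axis j 1)" for i j
    using concave_deriv_ge[OF C5_f C2_f Gf, of i "axis j 1"] by (simp add: Jent inner_axis)
  have ax0: "f i (axis j 1) \<ge> 0" for i j
    using fmono[of 0 "axis j 1" i] C2_f by (simp add: axis_def)
  have Jnn: "J$i$j \<ge> 0" for i j using Jge[of i j] ax0[of i j] by linarith
  have Jpos: "J$i$j > 0" if "(i, j) \<in> E_R" for i j
  proof -
    have "f i 0 < f i (axis j 1)"
      using C4_f[OF that] unfolding strict_incr_in_def by (auto simp: axis_def)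
    thus ?thesis using Jge[of i j] C2_f[of i] by linarith
  qed
  define a where "a i = \<delta> i / (\<theta> i + \<delta> i)" for i
  have a0: "a i > 0" for i using theta_pos[of i] delta_pos[of i] by (simp add: a_def)
  define Q where "Q = (jacobian0 f - diag \<theta>)
         - diag (\<lambda>i. \<theta> i / (\<theta> i + \<delta> i)) ** jacobian0 f
         - diag (\<lambda>i. g i 1)"
  have Qent: "Q$i$j = a i * J$i$j - (if i = j then \<theta> i + g i 1 else 0)" for i j
  proof -
    have m: "(diag d ** J)$i$j = d i * J$i$j" for d
      by (simp add: matrix_matrix_mult_def diag_def if_distrib[of "\<lambda>x. x * _"] cong: if_cong)
    have "\<theta> i + \<delta> i > 0" using theta_pos[of i] delta_pos[of i] by simp
    hence "J$i$j - \<theta> i / (\<theta> i + \<delta> i) * J$i$j = a i * J$i$j" unfolding a_def by (simp add: field_simps)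
    thus ?thesis unfolding Q_def J_def[symmetric] using m by (cases "i = j") (simp_all add: diag_def)
  qed
  have offdiag: "Q$i$j \<ge> 0" if "i \<noteq> j" for i j using that Jnn[of i j] a0[of i] by (simp add: Qent)
  have edge: "Q$i$j > 0" if "(i, j) \<in> E_R" "i \<noteq> j" for i j using that Jpos[OF that(1)] a0[of i] by (simp add: Qent)
  define s where "s = spectral_abscissa Q"
  have spos: "s > 0" using Q2_pos unfolding s_def Q_def .
  obtain z v where zv: "v \<noteq> 0" "(cmat Q - mat z) *v v = 0" "Re z = s"
    using eigen_exists[OF spos[unfolded s_def]] s_def by blast
  define w where "w = (\<chi> i. cmod (v$i))"
  have w0: "w$i \<ge> 0" for i by (simp add: w_def)
  have wsub: "(Q *v w)$i \<ge> s * w$i" for i using eigen_abs[OF offdiag zv(2)] zv(3) by (simp add: w_def)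
  have wnz: "w \<noteq> 0"
  proof
    assume "w = 0"
    hence "v$i = 0" for i by (metis norm_eq_zero vec_lambda_beta w_def zero_index)
    thus False using zv(1) by (simp add: vec_eq_iff)
  qed
  obtain u where u: "\<And>i. u$i > 0" "\<And>i. (Q *v u)$i \<ge> s * u$i"
    using pos_subinvariant[OF offdiag edge conn_R w0 wsub wnz] by blast
  have Ju: "(\<Sum>j\<in>UNIV. J$i$j * u$j) = Gf i 0 \<bullet> u" for i by (simp add: Jent inner_vec_def)
  have Jun: "Gf i 0 \<bullet> u \<ge> 0" for i
    unfolding Ju[symmetric] using Jnn u(1) by (intro sum_nonneg) (simp add: less_imp_le)
  have Qu: "\<delta> i / (\<theta> i + \<delta> i) * (Gf i 0 \<bullet> u) - (\<theta> i + g i 1) * u$i \<ge> s * u$i" for i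
  proof -
    have "(Q *v u)$i = (\<Sum>j\<in>UNIV. a i * (J$i$j * u$j) - (if i = j then (\<theta> i + g i 1) * u$j else 0))"
      unfolding matrix_vector_mult_def by (auto simp: Qent algebra_simps intro!: sum.cong)
    also have "\<dots> = (\<Sum>j\<in>UNIV. a i * (J$i$j * u$j)) - (\<Sum>j\<in>UNIV. (if i = j then (\<theta> i + g i 1) * u$j else 0))"
      by (simp add: sum_subtractf)
    also have "\<dots> = a i * (Gf i 0 \<bullet> u) - (\<theta> i + g i 1) * u$i"
      by (simp add: sum_distrib_left[symmetric] Ju)
    finally show ?thesis using u(2)[of i] by (simp add: a_def)
  qed
  have inv: "R t $ i \<ge> 0 \<and> T t $ i \<ge> 0 \<and> R t $ i + T t $ i \<le> 1" if "t \<ge> 0" for t i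
    by (rule invariance[OF theta_pos delta_pos fmono gmono C2_f C2_g C5_f C5_g fcont gcont ode_R ode_T
        init_Omega that]) auto
  have Rpos: "R t $ i > 0" if "t \<ge> 0" for t i
    by (rule positivity[OF theta_pos fmono gmono C2_f ode_R inv init_R_pos that]) auto
  have Sb: "R t $ i + T t $ i > \<delta> i / (\<theta> i + \<delta> i) - 2 * exp (- ((\<theta> i + \<delta> i) / 2) * t)" if "t \<ge> 0" for t i
    by (rule Sbound[OF theta_pos delta_pos ode_R ode_T inv that]) auto
  show ?thesis
    by (rule persistence[OF theta_pos delta_pos fmono gmono C2_f Gf ode_R inv Rpos Sb u(1) Jun spos Qu])
      auto
qed

end
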